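(* Let $T$ be a tree such that the longest $2$-path in $T$ has length $d\ge1$, and let $k$ be a positive integer. Then there exists $L>0$ (depending only on $k$ and $d$) such that the following holds: if $T$ contains a $\mathrm{C}$-gadget of order $d$ and length $L$, then there exists $1\le d'\le d$ such that $T$ contains a closed strong $\mathrm{C}$-gadget of order $d'$ with at least $k$ junctions.
   Context: In a tree $T$: a $2$-path of length $a$ is a path $x_0,\dots,x_a$ with $\deg(x_0)\ne2$, $\deg(x_1)=\dots=\deg(x_{a-1})=2$, $\deg(x_a)\ne 2$. A source is a vertex of degree $>2$. A ray of length $a$ is a $2$-path $x_0,\dots,x_a$ with $\deg(x_0)>2$, $\deg(x_a)=1$; $x_0$ is its source. For a source $s$, let $\deg_{\mathcal{L}}^a(s)$ be the number of rays of length $a$ with source $s$ and $\deg_{\overline{\mathcal{L}}}(s)=\deg(s)-\sum_a\deg_{\mathcal{L}}^a(s)$; $s$ is a fork if $\deg_{\overline{\mathcal{L}}}(s)=1$ and there are positive integers $a,b$ with either $a\ne b$ and $\deg^a_{\mathcal{L}}(s),\deg^b_{\mathcal{L}}(s)>0$, or $a=b$ and $\deg^a_{\mathcal{L}}(s)>1$. A $\mathrm{C}$-gadget of order $d$ and length $k$ is a path $x_0,\dots,x_k$ such that each inner vertex $x_i$ either has degree $2$ or is a source such that every neighbour of $x_i$ other than $x_{i-1},x_{i+1}$ is contained in a ray of length at most $d$ from $x_i$ to a leaf. A $\mathrm{C}$-gadget $x_0,\dots,x_L$ of order $d$ is a strong $\mathrm{C}$-gadget with $k$ junctions if there are integers $0=i_0<i_1<\dots<i_k<i_{k+1}=L$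 with $i_{j+1}-i_j>2d$ for all $j\in\{0,\dots,k\}$ and, for all $j\in\{1,\dots,k\}$, $x_{i_j}$ is the source of a ray of length $d$ containing neither $x_{i_j-1}$ nor $x_{i_j+1}$; $x_{i_1},\dots,x_{i_k}$ are the junctions. It is closed if neither $x_{i_1}$ nor $x_{i_k}$ is a fork. *)

theory Defs
  imports Main
begin

text \<open>Finite simple graphs given by a vertex set V and an edge relation E.
  Paths are lists of distinct vertices with consecutive vertices adjacent;
  a path x_0,...,x_a (list of length a+1) has length a.\<close>

definition is_path :: "'a set \<Rightarrow> ('a \<Rightarrow> 'a \<Rightarrow> bool) \<Rightarrow> 'a list \<Rightarrow> bool" where
  "is_path V E xs \<longleftrightarrow> xs \<noteq> [] \<and> set xs \<subseteq> V \<and> distinct xs \<and>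
     (\<forall>i. Suc i < length xs \<longrightarrow> E (xs ! i) (xs ! Suc i))"

definition is_tree :: "'a set \<Rightarrow> ('a \<Rightarrow> 'a \<Rightarrow> bool) \<Rightarrow> bool" where
  "is_tree V E \<longleftrightarrow> finite V \<and> V \<noteq> {} \<and>
     (\<forall>x y. E x y \<longrightarrow> x \<in> V \<and> y \<in> V \<and> x \<noteq> y \<and> E y x) \<and>
     (\<forall>u\<in>V. \<forall>v\<in>V. \<exists>xs. is_path V E xs \<and> hd xs = u \<and> last xs = v) \<and>
     \<not> (\<exists>xs. is_path V E xs \<and> length xs \<ge> 3 \<and> E (last xs) (hd xs))"

definition deg :: "'a set \<Rightarrow> ('a \<Rightarrow> 'a \<Rightarrow> bool) \<Rightarrow> 'a \<Rightarrow> nat" where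
  "deg V E v = card {u \<in> V. E v u}"

definition two_path :: "'a set \<Rightarrow> ('a \<Rightarrow> 'a \<Rightarrow> bool) \<Rightarrow> 'a list \<Rightarrow> bool" where
  "two_path V E xs \<longleftrightarrow> is_path V E xs \<and> length xs \<ge> 2 \<and>
     deg V E (hd xs) \<noteq> 2 \<and> deg V E (last xs) \<noteq> 2 \<and>
     (\<forall>i. 0 < i \<and> Suc i < length xs \<longrightarrow> deg V E (xs ! i) = 2)"

definition is_source :: "'a set \<Rightarrow> ('a \<Rightarrow> 'a \<Rightarrow> bool) \<Rightarrow> 'a \<Rightarrow> bool" where
  "is_source V E s \<longleftrightarrow> s \<in> V \<and> deg V E s > 2"

definition is_ray :: "'a set \<Rightarrow> ('a \<Rightarrow> 'a \<Rightarrow> bool) \<Rightarrow> 'a list \<Rightarrow> bool" where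
  "is_ray V E xs \<longleftrightarrow> two_path V E xs \<and> deg V E (hd xs) > 2 \<and> deg V E (last xs) = 1"

definition ray_deg :: "'a set \<Rightarrow> ('a \<Rightarrow> 'a \<Rightarrow> bool) \<Rightarrow> nat \<Rightarrow> 'a \<Rightarrow> nat" where
  "ray_deg V E a s = card {xs. is_ray V E xs \<and> hd xs = s \<and> length xs = Suc a}"

text \<open>deg_{L-bar}(s) = deg(s) - sum over a of deg_L^a(s); rays have length
  between 1 and card V, so the sum over a ranges over 1..card V.\<close>
definition nonray_deg :: "'a set \<Rightarrow> ('a \<Rightarrow> 'a \<Rightarrow> bool) \<Rightarrow> 'a \<Rightarrow> nat" where
  "nonray_deg V E s = deg V E s - (\<Sum>a\<in>{1..card V}. ray_deg V E a s)"

definition is_fork :: "'a set \<Rightarrow> ('a \<Rightarrow> 'a \<Rightarrow> bool) \<Rightarrow> 'a \<Rightarrow> bool" where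
  "is_fork V E s \<longleftrightarrow> is_source V E s \<and> nonray_deg V E s = 1 \<and>
     (\<exists>a b. 0 < a \<and> 0 < b \<and>
        ((a \<noteq> b \<and> ray_deg V E a s > 0 \<and> ray_deg V E b s > 0) \<or>
         (a = b \<and> ray_deg V E a s > 1)))"

definition c_gadget :: "'a set \<Rightarrow> ('a \<Rightarrow> 'a \<Rightarrow> bool) \<Rightarrow> nat \<Rightarrow> nat \<Rightarrow> 'a list \<Rightarrow> bool" where
  "c_gadget V E d k xs \<longleftrightarrow> is_path V E xs \<and> length xs = Suc k \<and>
     (\<forall>i. 0 < i \<and> i < k \<longrightarrow>
        deg V E (xs ! i) = 2 \<or>
        (is_source V E (xs ! i) \<and>
         (\<forall>y. E (xs ! i) y \<and> y \<noteq> xs ! (i - 1) \<and> y \<noteq> xs ! Suc i \<longrightarrow>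
            (\<exists>r. is_ray V E r \<and> hd r = xs ! i \<and> r ! 1 = y \<and> length r \<le> Suc d))))"

definition closed_strong_c_gadget ::
  "'a set \<Rightarrow> ('a \<Rightarrow> 'a \<Rightarrow> bool) \<Rightarrow> nat \<Rightarrow> nat \<Rightarrow> 'a list \<Rightarrow> bool" where
  "closed_strong_c_gadget V E d k xs \<longleftrightarrow>
     (\<exists>L. c_gadget V E d L xs \<and>
      (\<exists>I :: nat \<Rightarrow> nat. I 0 = 0 \<and> I (Suc k) = L \<and>
         (\<forall>j\<le>k. I j < I (Suc j) \<and> I (Suc j) - I j > 2 * d) \<and>
         (\<forall>j\<in>{1..k}. \<exists>r. is_ray V E r \<and> hd r = xs ! (I j) \<and> length r = Suc d \<and>
              xs ! (I j - 1) \<notin> set r \<and> xs ! Suc (I j) \<notin> set r) \<and>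
         \<not> is_fork V E (xs ! (I 1)) \<and> \<not> is_fork V E (xs ! (I k))))"

end

theory Submission
  imports Defs
begin

lemma tree_E: "is_tree V E \<Longrightarrow> E x y \<Longrightarrow> x \<in> V \<and> y \<in> V \<and> x \<noteq> y \<and> E y x"
  unfolding is_tree_def by blast

lemma tree_fin: "is_tree V E \<Longrightarrow> finite V"
  unfolding is_tree_def by blast

lemma is_path_take: "is_path V E xs \<Longrightarrow> 0 < n \<Longrightarrow> is_path V E (take n xs)"
  unfolding is_path_def by (auto dest: in_set_takeD)

lemma is_path_drop: "is_path V E xs \<Longrightarrow> n < length xs \<Longrightarrow> is_path V E (drop n xs)"
  unfolding is_path_def by (auto dest: in_set_dropD)

lemma is_path_rev: "is_tree V E \<Longrightarrow> is_path V E xs \<Longrightarrow> is_path V E (rev xs)"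
  unfolding is_path_def
proof (intro conjI allI impI)
  fix i assume t: "is_tree V E" and p: "xs \<noteq> [] \<and> set xs \<subseteq> V \<and> distinct xs \<and>
     (\<forall>i. Suc i < length xs \<longrightarrow> E (xs ! i) (xs ! Suc i))" and i: "Suc i < length (rev xs)"
  have "E (xs ! (length xs - Suc (Suc i))) (xs ! Suc (length xs - Suc (Suc i)))"
    using p i by simp
  moreover have "Suc (length xs - Suc (Suc i)) = length xs - Suc i" using i by simp
  ultimately have "E (xs ! (length xs - Suc (Suc i))) (xs ! (length xs - Suc i))" by simp
  then show "E (rev xs ! i) (rev xs ! Suc i)" using i tree_E[OF t] by (simp add: rev_nth)
qed (auto)

lemma path_nth_neq: "is_path V E xs \<Longrightarrow> i < length xs \<Longrightarrow> j < length xs \<Longrightarrow> i \<noteq> j \<Longrightarrow> xs ! i \<noteq> xs ! j"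
  unfolding is_path_def by (simp add: nth_eq_iff_index_eq)

lemma path_edge: "is_path V E xs \<Longrightarrow> Suc i < length xs \<Longrightarrow> E (xs ! i) (xs ! Suc i)"
  unfolding is_path_def by blast

lemma path_in: "is_path V E xs \<Longrightarrow> i < length xs \<Longrightarrow> xs ! i \<in> V"
  unfolding is_path_def by auto

lemma cycle_free:
  assumes t: "is_tree V E" and p: "is_path V E P" and j: "2 \<le> j" "j < length P"
    and e: "E (P ! j) (P ! 0)"
  shows False
proof -
  have "is_path V E (take (Suc j) P)" using is_path_take[OF p] by simp
  moreover have "length (take (Suc j) P) \<ge> 3" using j by simp
  moreover have "last (take (Suc j) P) = P ! j" using j by (subst last_conv_nth) auto
  moreover have "hd (take (Suc j) P) = P ! 0" using j by (cases P) auto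
  ultimately show False using t e unfolding is_tree_def by metis
qed

definition nbrs :: "'a set \<Rightarrow> ('a \<Rightarrow> 'a \<Rightarrow> bool) \<Rightarrow> 'a \<Rightarrow> 'a set" where
  "nbrs V E v = {u \<in> V. E v u}"

lemma deg_nbrs: "deg V E v = card (nbrs V E v)" unfolding deg_def nbrs_def by simp

lemma fin_nbrs: "is_tree V E \<Longrightarrow> finite (nbrs V E v)"
  unfolding nbrs_def using tree_fin[of V E] by simp

lemma deg2_nbr:
  assumes t: "is_tree V E" and d: "deg V E v = 2" and "E v a" "E v b" "E v c" "a \<noteq> b"
  shows "c = a \<or> c = b"
proof -
  have s: "{a, b} \<subseteq> nbrs V E v" using assms tree_E[OF t] unfolding nbrs_def by auto
  have "card {a,b} = card (nbrs V E v)" using d assms by (simp add: deg_nbrs)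
  then have "{a,b} = nbrs V E v" using card_subset_eq[OF fin_nbrs[OF t] s] by simp
  moreover have "c \<in> nbrs V E v" using assms tree_E[OF t] unfolding nbrs_def by auto
  ultimately show ?thesis by auto
qed

lemma deg_ge2:
  assumes t: "is_tree V E" and p: "is_path V E P" and i: "0 < i" "Suc i < length P"
  shows "deg V E (P ! i) \<ge> 2"
proof -
  have e1: "E (P ! i) (P ! (i - 1))" using path_edge[OF p, of "i - 1"] i tree_E[OF t] by simp
  have e2: "E (P ! i) (P ! Suc i)" using path_edge[OF p, of i] i by simp
  have ne: "P ! (i - 1) \<noteq> P ! Suc i" using path_nth_neq[OF p] i by simp
  have s: "{P ! (i - 1), P ! Suc i} \<subseteq> nbrs V E (P ! i)"
    using e1 e2 tree_E[OF t] unfolding nbrs_def by auto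
  have "card {P ! (i - 1), P ! Suc i} \<le> card (nbrs V E (P ! i))"
    using card_mono[OF fin_nbrs[OF t] s] .
  then show ?thesis using ne by (simp add: deg_nbrs)
qed


lemma agree:
  assumes t: "is_tree V E" and p: "is_path V E P" and q: "is_path V E Q"
    and lp: "length P \<ge> 2" and lq: "length Q \<ge> 2"
    and h0: "P ! 0 = Q ! 0" and h1: "P ! 1 = Q ! 1"
    and dg: "\<forall>j. 0 < j \<and> Suc j < length P \<longrightarrow> deg V E (P ! j) = 2"
  shows "\<forall>i\<le>j. i < length P \<longrightarrow> i < length Q \<longrightarrow> P ! i = Q ! i"
proof (induction j)
  case 0 then show ?case using h0 by simp
next
  case (Suc j)
  show ?case
  proof (intro allI impI)
    fix i assume i: "i \<le> Suc j" "i < length P" "i < length Q"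
    show "P ! i = Q ! i"
    proof (cases "i \<le> j")
      case True then show ?thesis using Suc.IH i by simp
    next
      case False
      then have ii: "i = Suc j" using i by simp
      show ?thesis
      proof (cases "j = 0")
        case True then show ?thesis using ii h1 by simp
      next
        case False
        have eqj: "P ! j = Q ! j" using Suc.IH i ii by simp
        have eqj1: "P ! (j - 1) = Q ! (j - 1)" using Suc.IH i ii by simp
        have dj: "deg V E (P ! j) = 2" using dg False i ii by simp
        have e1: "E (P ! j) (P ! (j - 1))" using path_edge[OF p, of "j - 1"] i ii False tree_E[OF t] by simp
        have e2: "E (P ! j) (P ! Suc j)" using path_edge[OF p, of j] i ii by simp
        have e3: "E (P ! j) (Q ! Suc j)" using path_edge[OF q, of j] i ii eqj by simp
        have ne: "P ! (j - 1) \<noteq> P ! Suc j" using path_nth_neq[OF p] i ii by simp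
        have ne2: "Q ! Suc j \<noteq> Q ! (j - 1)" using path_nth_neq[OF q] i ii by simp
        from deg2_nbr[OF t dj e1 e2 e3 ne] ne2 eqj1 show ?thesis using ii by auto
      qed
    qed
  qed
qed

lemma two_path_inner: "two_path V E r \<Longrightarrow> 0 < j \<Longrightarrow> Suc j < length r \<Longrightarrow> deg V E (r ! j) = 2"
  unfolding two_path_def by blast

lemma ray_props: "is_ray V E r \<Longrightarrow> is_path V E r \<and> length r \<ge> 2 \<and> deg V E (r ! 0) > 2
   \<and> deg V E (r ! (length r - 1)) = 1 \<and> (\<forall>j. 0 < j \<and> Suc j < length r \<longrightarrow> deg V E (r ! j) = 2)"
  unfolding is_ray_def two_path_def is_path_def
  by (auto simp: hd_conv_nth last_conv_nth)

lemma ray_unique: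
  assumes t: "is_tree V E" and r1: "is_ray V E r1" and r2: "is_ray V E r2"
    and h: "hd r1 = hd r2" and h1: "r1 ! 1 = r2 ! 1"
  shows "r1 = r2"
proof -
  note a1 = ray_props[OF r1] and a2 = ray_props[OF r2]
  have "r1 \<noteq> []" "r2 \<noteq> []" using a1 a2 by auto
  then have h0: "r1 ! 0 = r2 ! 0" using h by (simp add: hd_conv_nth)
  have ag1: "\<forall>i. i < length r1 \<longrightarrow> i < length r2 \<longrightarrow> r1 ! i = r2 ! i"
    using agree[OF t _ _ _ _ h0 h1, of "max (length r1) (length r2)"] a1 a2 by auto
  have ag2: "\<forall>i. i < length r1 \<longrightarrow> i < length r2 \<longrightarrow> r1 ! i = r2 ! i"
    using ag1 by blast
  have "length r1 = length r2"
  proof (rule ccontr)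
    assume ne: "length r1 \<noteq> length r2"
    show False
    proof (cases "length r1 < length r2")
      case True
      have l: "length r1 - 1 < length r1" using a1 by linarith
      then have "r1 ! (length r1 - 1) = r2 ! (length r1 - 1)" using ag1 True by auto
      moreover have "deg V E (r2 ! (length r1 - 1)) = 2"
        proof -
          have "2 \<le> length r1" using a1 by blast
          then have "0 < length r1 - 1" "Suc (length r1 - 1) < length r2" using True by linarith+
          then show ?thesis using two_path_inner[of V E r2 "length r1 - 1"] r2 unfolding is_ray_def by blast
        qed
      ultimately show False using a1 by simp
    next
      case False
      then have F: "length r2 < length r1" using ne by simp
      have l: "length r2 - 1 < length r2" using a2 by linarith
      then have "r1 ! (length r2 - 1) = r2 ! (length r2 - 1)" using ag1 F by auto
      moreover have "deg V E (r1 ! (length r2 - 1)) = 2"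
        proof -
          have "2 \<le> length r2" using a2 by blast
          then have "0 < length r2 - 1" "Suc (length r2 - 1) < length r1" using F by linarith+
          then show ?thesis using two_path_inner[of V E r1 "length r2 - 1"] r1 unfolding is_ray_def by blast
        qed
      ultimately show False using a2 by simp
    qed
  qed
  then show ?thesis using ag1 by (simp add: nth_equalityI)
qed

lemma ray_not_along:
  assumes t: "is_tree V E" and bd: "\<forall>r. two_path V E r \<longrightarrow> length r \<le> Suc d"
    and p: "is_path V E P" and b: "b + Suc d < length P"
    and r: "is_ray V E r" and h: "hd r = P ! b" and h1: "r ! 1 = P ! Suc b"
  shows False
proof -
  note a = ray_props[OF r]
  have lr: "length r \<le> Suc d" using bd r unfolding is_ray_def by blast
  have pd: "is_path V E (drop b P)" using is_path_drop[OF p] b by simp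
  have "r \<noteq> []" using a by auto
  then have h0: "r ! 0 = drop b P ! 0" using h b by (simp add: hd_conv_nth)
  have h1': "r ! 1 = drop b P ! 1" using h1 b by simp
  have ag: "\<forall>i\<le>length r. i < length r \<longrightarrow> i < length (drop b P) \<longrightarrow> r ! i = drop b P ! i"
    using agree[OF t _ pd _ _ h0 h1'] a b by auto
  have "r ! (length r - 1) = P ! (b + (length r - 1))" using ag a lr b by auto
  moreover have "deg V E (P ! (b + (length r - 1))) \<ge> 2"
    using deg_ge2[OF t p] a lr b by simp
  ultimately show False using a by simp
qed


definition inner2 :: "'a set \<Rightarrow> ('a \<Rightarrow> 'a \<Rightarrow> bool) \<Rightarrow> 'a list \<Rightarrow> bool" where
  "inner2 V E P \<longleftrightarrow> (\<forall>i. 0 < i \<and> Suc i < length P \<longrightarrow> deg V E (P ! i) = 2)"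

lemma inner2_rev: "inner2 V E P \<Longrightarrow> inner2 V E (rev P)"
  unfolding inner2_def
proof (intro allI impI)
  fix i assume a: "\<forall>i. 0 < i \<and> Suc i < length P \<longrightarrow> deg V E (P ! i) = 2"
    and i: "0 < i \<and> Suc i < length (rev P)"
  have "0 < length P - Suc i" "Suc (length P - Suc i) < length P" using i by auto
  then have "deg V E (P ! (length P - Suc i)) = 2" using a by blast
  then show "deg V E (rev P ! i) = 2" using i by (simp add: rev_nth)
qed

lemma path_len_le: "is_path V E P \<Longrightarrow> finite V \<Longrightarrow> length P \<le> card V"
  unfolding is_path_def by (metis card_mono distinct_card)

lemma extend_hd:
  assumes t: "is_tree V E" and p: "is_path V E P" and l: "length P \<ge> 2" and i2: "inner2 V E P"
    and dh: "deg V E (P ! 0) = 2"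
  shows "\<exists>u. is_path V E (u # P) \<and> inner2 V E (u # P)"
proof -
  have e1: "E (P ! 0) (P ! 1)" using path_edge[OF p, of 0] l by simp
  have "P ! 1 \<in> nbrs V E (P ! 0)" using e1 tree_E[OF t] unfolding nbrs_def by auto
  moreover have "card (nbrs V E (P ! 0)) = 2" using dh by (simp add: deg_nbrs)
  ultimately have "nbrs V E (P ! 0) \<noteq> {P ! 1}" by auto
  then obtain u where u: "u \<in> nbrs V E (P ! 0)" "u \<noteq> P ! 1"
    using \<open>P ! 1 \<in> nbrs V E (P ! 0)\<close> by blast
  have eu: "E (P ! 0) u" "u \<in> V" using u unfolding nbrs_def by auto
  have un: "u \<notin> set P"
  proof
    assume "u \<in> set P"
    then obtain j where j: "j < length P" "P ! j = u" by (auto simp: in_set_conv_nth)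
    have "j \<noteq> 0"
    proof
      assume "j = 0" then show False using j eu tree_E[OF t, of "P ! 0" u] by simp
    qed
    moreover have "j \<noteq> 1" using j u by auto
    ultimately have "2 \<le> j" by simp
    moreover have "E (P ! j) (P ! 0)" using j eu tree_E[OF t] by auto
    ultimately show False using cycle_free[OF t p] j by blast
  qed
  have "is_path V E (u # P)"
    unfolding is_path_def
  proof (intro conjI allI impI)
    show "set (u # P) \<subseteq> V" using p eu unfolding is_path_def by auto
    show "distinct (u # P)" using p un unfolding is_path_def by auto
    fix i assume i: "Suc i < length (u # P)"
    show "E ((u # P) ! i) ((u # P) ! Suc i)"
    proof (cases i)
      case 0 then show ?thesis using eu tree_E[OF t] by simp
    next
      case (Suc m) then show ?thesis using path_edge[OF p, of m] i by simp
    qed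
  qed simp
  moreover have "inner2 V E (u # P)"
    unfolding inner2_def
  proof (intro allI impI)
    fix i assume i: "0 < i \<and> Suc i < length (u # P)"
    then obtain m where m: "i = Suc m" by (cases i) auto
    show "deg V E ((u # P) ! i) = 2"
    proof (cases m)
      case 0 then show ?thesis using m dh by simp
    next
      case (Suc n) then show ?thesis using m i i2 unfolding inner2_def by simp
    qed
  qed
  ultimately show ?thesis by blast
qed

lemma extend:
  assumes t: "is_tree V E" and p: "is_path V E P" and l: "length P \<ge> 2" and i2: "inner2 V E P"
  shows "\<exists>Q. two_path V E Q \<and> length Q \<ge> length P"
proof -
  define S where "S = (\<lambda>n. \<exists>Q. is_path V E Q \<and> length Q \<ge> length P \<and> inner2 V E Q \<and> length Q = n)"
  have "S (length P)" using p i2 unfolding S_def by blast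
  moreover have "\<forall>n. S n \<longrightarrow> n \<le> card V" unfolding S_def using path_len_le tree_fin[OF t] by blast
  ultimately obtain n where n: "S n" "\<forall>m. S m \<longrightarrow> m \<le> n"
    using Nat.ex_has_greatest_nat[of S "length P" "card V"] by blast
  then obtain Q where q: "is_path V E Q" "length Q \<ge> length P" "inner2 V E Q" "length Q = n"
    unfolding S_def by blast
  have lq: "length Q \<ge> 2" using q l by simp
  have h: "deg V E (Q ! 0) \<noteq> 2"
  proof
    assume "deg V E (Q ! 0) = 2"
    then obtain u where "is_path V E (u # Q)" "inner2 V E (u # Q)" using extend_hd[OF t q(1) lq q(3)] by blast
    then have "S (Suc n)" unfolding S_def using q by (intro exI[of _ "u # Q"]) auto
    then show False using n by fastforce
  qed
  have lt: "deg V E (Q ! (length Q - 1)) \<noteq> 2"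
  proof
    assume a: "deg V E (Q ! (length Q - 1)) = 2"
    have rp: "is_path V E (rev Q)" using is_path_rev[OF t q(1)] .
    have "rev Q ! 0 = Q ! (length Q - 1)" using lq by (subst rev_nth) auto
    then obtain u where "is_path V E (u # rev Q)" "inner2 V E (u # rev Q)"
      using extend_hd[OF t rp _ inner2_rev[OF q(3)]] a lq by auto
    then have "S (Suc n)" unfolding S_def using q by (intro exI[of _ "u # rev Q"]) auto
    then show False using n by fastforce
  qed
  have "Q \<noteq> []" using lq by auto
  then have "two_path V E Q"
    unfolding two_path_def using q lq h lt unfolding inner2_def
    by (simp add: hd_conv_nth last_conv_nth)
  then show ?thesis using q by blast
qed

lemma not_fork:
  assumes t: "is_tree V E" and ea: "E s a" and ec: "E s c" and ac: "a \<noteq> c"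
    and nr: "\<forall>r. is_ray V E r \<and> hd r = s \<longrightarrow> r ! 1 \<noteq> a \<and> r ! 1 \<noteq> c"
  shows "\<not> is_fork V E s"
proof -
  define R where "R = (\<lambda>n. {xs. is_ray V E xs \<and> hd xs = s \<and> length xs = Suc n})"
  have fV: "finite V" using tree_fin[OF t] .
  have fR: "\<forall>n\<in>{1..card V}. finite (R n)"
  proof
    fix n
    have "R n \<subseteq> {xs. set xs \<subseteq> V \<and> length xs = Suc n}"
      unfolding R_def is_ray_def two_path_def is_path_def by auto
    then show "finite (R n)" using finite_lists_length_eq[OF fV] finite_subset by blast
  qed
  have dj: "\<forall>i\<in>{1..card V}. \<forall>j\<in>{1..card V}. i \<noteq> j \<longrightarrow> R i \<inter> R j = {}"
    unfolding R_def by auto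
  have sum: "(\<Sum>n\<in>{1..card V}. ray_deg V E n s) = card (\<Union>(R ` {1..card V}))"
    using card_UN_disjoint[OF _ fR dj] unfolding R_def ray_deg_def by simp
  define N where "N = nbrs V E s - {a, c}"
  have inj: "inj_on (\<lambda>r. r ! 1) (\<Union>(R ` {1..card V}))"
  proof (rule inj_onI)
    fix x y assume "x \<in> \<Union>(R ` {1..card V})" "y \<in> \<Union>(R ` {1..card V})" "x ! 1 = y ! 1"
    then show "x = y" using ray_unique[OF t] unfolding R_def by auto
  qed
  have im: "(\<lambda>r. r ! 1) ` (\<Union>(R ` {1..card V})) \<subseteq> N"
  proof
    fix y assume "y \<in> (\<lambda>r. r ! 1) ` (\<Union>(R ` {1..card V}))"
    then obtain r where r: "is_ray V E r" "hd r = s" "y = r ! 1" unfolding R_def by auto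
    note rp = ray_props[OF r(1)]
    have "r \<noteq> []" using rp by auto
    then have "r ! 0 = s" using r by (simp add: hd_conv_nth)
    moreover have "E (r ! 0) (r ! 1)" "r ! 1 \<in> V" using rp path_edge[of V E r 0] path_in[of V E r 1] by auto
    ultimately show "y \<in> N" unfolding N_def nbrs_def using r nr by auto
  qed
  have fN: "finite N" unfolding N_def using fin_nbrs[OF t] by simp
  have c1: "card (\<Union>(R ` {1..card V})) \<le> card N" using card_inj_on_le[OF inj im fN] .
  have sub: "{a, c} \<subseteq> nbrs V E s" using ea ec tree_E[OF t] unfolding nbrs_def by auto
  have "card N = card (nbrs V E s) - 2" unfolding N_def using card_Diff_subset[OF _ sub] ac by simp
  moreover have "card (nbrs V E s) \<ge> 2" using card_mono[OF fin_nbrs[OF t] sub] ac by simp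
  ultimately have "nonray_deg V E s \<ge> 2" unfolding nonray_deg_def using sum c1 by (simp add: deg_nbrs)
  then show ?thesis unfolding is_fork_def by simp
qed


definition good :: "'a set \<Rightarrow> ('a \<Rightarrow> 'a \<Rightarrow> bool) \<Rightarrow> 'a list \<Rightarrow> nat \<Rightarrow> nat \<Rightarrow> bool" where
  "good V E xs e i \<longleftrightarrow> deg V E (xs ! i) = 2 \<or>
     (is_source V E (xs ! i) \<and>
      (\<forall>y. E (xs ! i) y \<and> y \<noteq> xs ! (i - 1) \<and> y \<noteq> xs ! Suc i \<longrightarrow>
         (\<exists>r. is_ray V E r \<and> hd r = xs ! i \<and> r ! 1 = y \<and> length r \<le> Suc e)))"

lemma window:
  assumes p: "is_path V E xs" and l: "q + L < length xs"
    and g: "\<forall>i. q < i \<and> i < q + L \<longrightarrow> good V E xs e i"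
  shows "c_gadget V E e L (take (Suc L) (drop q xs))"
proof -
  have pp: "is_path V E (take (Suc L) (drop q xs))"
    using is_path_take[OF is_path_drop[OF p], of q "Suc L"] l by simp
  have len: "length (take (Suc L) (drop q xs)) = Suc L" using l by simp
  have nth: "\<And>i. i \<le> L \<Longrightarrow> take (Suc L) (drop q xs) ! i = xs ! (q + i)" using l by simp
  show ?thesis unfolding c_gadget_def
  proof (intro conjI pp len allI impI)
    fix i assume i: "0 < i \<and> i < L"
    have gi: "good V E xs e (q + i)" using g i by simp
    have e1: "take (Suc L) (drop q xs) ! i = xs ! (q + i)" using nth i by simp
    have "i - 1 \<le> L" "q + (i - 1) = q + i - 1" using i by auto
    then have e2: "take (Suc L) (drop q xs) ! (i - 1) = xs ! (q + i - 1)" using nth[of "i - 1"] by metis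
    have e3: "take (Suc L) (drop q xs) ! Suc i = xs ! Suc (q + i)" using nth[of "Suc i"] i by simp
    show "deg V E (take (Suc L) (drop q xs) ! i) = 2 \<or>
        is_source V E (take (Suc L) (drop q xs) ! i) \<and>
        (\<forall>y. E (take (Suc L) (drop q xs) ! i) y \<and>
             y \<noteq> take (Suc L) (drop q xs) ! (i - 1) \<and> y \<noteq> take (Suc L) (drop q xs) ! Suc i \<longrightarrow>
             (\<exists>r. is_ray V E r \<and> hd r = take (Suc L) (drop q xs) ! i \<and> r ! 1 = y \<and> length r \<le> Suc e))"
      using gi unfolding e1 e2 e3 good_def by simp
  qed
qed

lemma good0:
  assumes t: "is_tree V E" and p: "is_path V E xs" and i: "0 < i" "Suc i < length xs"
    and g: "good V E xs 0 i"
  shows "deg V E (xs ! i) = 2"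
proof (rule ccontr)
  assume nd: "deg V E (xs ! i) \<noteq> 2"
  then have src: "is_source V E (xs ! i)" and
    all: "\<forall>y. E (xs ! i) y \<and> y \<noteq> xs ! (i - 1) \<and> y \<noteq> xs ! Suc i \<longrightarrow>
         (\<exists>r. is_ray V E r \<and> hd r = xs ! i \<and> r ! 1 = y \<and> length r \<le> Suc 0)"
    using g unfolding good_def by auto
  have "\<not> nbrs V E (xs ! i) \<subseteq> {xs ! (i - 1), xs ! Suc i}"
  proof
    assume "nbrs V E (xs ! i) \<subseteq> {xs ! (i - 1), xs ! Suc i}"
    then have "card (nbrs V E (xs ! i)) \<le> card {xs ! (i - 1), xs ! Suc i}" by (simp add: card_mono)
    also have "\<dots> \<le> 2" by (simp add: card_insert_le_m1)
    finally show False using src unfolding is_source_def by (simp add: deg_nbrs)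
  qed
  then obtain y where "E (xs ! i) y" "y \<noteq> xs ! (i - 1)" "y \<noteq> xs ! Suc i" unfolding nbrs_def by auto
  then obtain r where "is_ray V E r" "length r \<le> Suc 0" using all by blast
  then show False using ray_props by fastforce
qed

lemma junction:
  assumes t: "is_tree V E" and bd: "\<forall>r. two_path V E r \<longrightarrow> length r \<le> Suc d"
    and p: "is_path V E xs" and b1: "Suc d \<le> b" and b2: "b + Suc d < length xs"
    and g1: "good V E xs (Suc e) b" and g0: "\<not> good V E xs e b"
  shows "(\<exists>r. is_ray V E r \<and> hd r = xs ! b \<and> length r = Suc (Suc e) \<and>
            xs ! (b - 1) \<notin> set r \<and> xs ! Suc b \<notin> set r) \<and> \<not> is_fork V E (xs ! b)"
proof
  have ea: "E (xs ! b) (xs ! (b - 1))" using path_edge[OF p, of "b - 1"] b1 b2 tree_E[OF t] by simp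
  have ea': "E (xs ! (b - 1)) (xs ! b)" using path_edge[OF p, of "b - 1"] b1 b2 by simp
  have ec: "E (xs ! b) (xs ! Suc b)" using path_edge[OF p, of b] b2 by simp
  have ec': "E (xs ! Suc b) (xs ! b)" using ec tree_E[OF t] by blast
  have ac: "xs ! (b - 1) \<noteq> xs ! Suc b" using path_nth_neq[OF p] b1 b2 by simp
  have ab: "xs ! (b - 1) \<noteq> xs ! b" using path_nth_neq[OF p] b1 b2 by simp
  have cb: "xs ! Suc b \<noteq> xs ! b" using path_nth_neq[OF p] b1 b2 by simp
  obtain y where y: "E (xs ! b) y" "y \<noteq> xs ! (b - 1)" "y \<noteq> xs ! Suc b"
    and ny: "\<not> (\<exists>r. is_ray V E r \<and> hd r = xs ! b \<and> r ! 1 = y \<and> length r \<le> Suc e)"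
    using g0 g1 unfolding good_def by blast
  obtain r where r: "is_ray V E r" "hd r = xs ! b" "r ! 1 = y" "length r \<le> Suc (Suc e)"
    using g0 g1 y unfolding good_def by blast
  have lr: "length r = Suc (Suc e)" using r ny by fastforce
  note rp = ray_props[OF r(1)]
  have "r \<noteq> []" using rp by auto
  then have r0: "r ! 0 = xs ! b" using r by (simp add: hd_conv_nth)
  have avoid: "z \<notin> set r" if z: "z \<noteq> y" "z \<noteq> xs ! b" "E z (xs ! b)" for z
  proof
    assume "z \<in> set r"
    then obtain j where j: "j < length r" "r ! j = z" by (auto simp: in_set_conv_nth)
    have "j \<noteq> 0"
    proof
      assume "j = 0" then show False using j z r0 by simp
    qed
    moreover have "j \<noteq> 1" using j z r by auto
    ultimately have "2 \<le> j" by simp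
    then show False using cycle_free[OF t _ _ j(1)] rp j z r0 by auto
  qed
  show "\<exists>r. is_ray V E r \<and> hd r = xs ! b \<and> length r = Suc (Suc e) \<and>
            xs ! (b - 1) \<notin> set r \<and> xs ! Suc b \<notin> set r"
  proof (rule exI[of _ r], intro conjI)
    show "xs ! (b - 1) \<notin> set r" using avoid[of "xs ! (b - 1)"] y ab ea' by metis
    show "xs ! Suc b \<notin> set r" using avoid[of "xs ! Suc b"] y cb ec' by metis
  qed (use r lr in auto)
  have nr: "\<forall>r. is_ray V E r \<and> hd r = xs ! b \<longrightarrow> r ! 1 \<noteq> xs ! (b - 1) \<and> r ! 1 \<noteq> xs ! Suc b"
  proof (intro allI impI conjI)
    fix r assume r: "is_ray V E r \<and> hd r = xs ! b"
    show "r ! 1 \<noteq> xs ! Suc b" using ray_not_along[OF t bd p b2] r by blast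
    have rp': "is_path V E (rev xs)" using is_path_rev[OF t p] .
    have "rev xs ! (length xs - Suc b) = xs ! b" using b2 by (simp add: rev_nth)
    moreover have "rev xs ! Suc (length xs - Suc b) = xs ! (b - 1)" using b1 b2 by (simp add: rev_nth Suc_diff_Suc)
    moreover have "length xs - Suc b + Suc d < length (rev xs)" using b1 b2 by simp
    ultimately show "r ! 1 \<noteq> xs ! (b - 1)" using ray_not_along[OF t bd rp'] r by metis
  qed
  show "\<not> is_fork V E (xs ! b)" using not_fork[OF t ea ec ac nr] .
qed


fun NN :: "nat \<Rightarrow> nat \<Rightarrow> nat \<Rightarrow> nat" where
  "NN d k 0 = Suc d"
| "NN d k (Suc e) = k * (NN d k e + 2 * (2 * d + 3))"

lemma main:
  assumes t: "is_tree V E" and bd: "\<forall>r. two_path V E r \<longrightarrow> length r \<le> Suc d"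
    and p: "is_path V E xs" and k: "1 \<le> k"
  shows "e \<le> d \<Longrightarrow> q + NN d k e < length xs \<Longrightarrow>
    (\<forall>i. q < i \<and> i < q + NN d k e \<longrightarrow> good V E xs e i) \<Longrightarrow>
    \<exists>d'. 1 \<le> d' \<and> d' \<le> d \<and> (\<exists>k' ys. k' \<ge> k \<and> closed_strong_c_gadget V E d' k' ys)"
proof (induction e arbitrary: q)
  case 0
  define sg where "sg = take (d + 2) (drop q xs)"
  have ps: "is_path V E sg" unfolding sg_def using is_path_take[OF is_path_drop[OF p]] 0 by simp
  have ls: "length sg = d + 2" unfolding sg_def using 0 by simp
  have "inner2 V E sg" unfolding inner2_def
  proof (intro allI impI)
    fix i assume i: "0 < i \<and> Suc i < length sg"
    have "sg ! i = xs ! (q + i)" unfolding sg_def using i ls 0 by simp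
    moreover have "deg V E (xs ! (q + i)) = 2"
      using good0[OF t p, of "q + i"] 0 i ls by simp
    ultimately show "deg V E (sg ! i) = 2" by simp
  qed
  then obtain Q where "two_path V E Q" "length Q \<ge> d + 2" using extend[OF t ps] ls by force
  then show ?case using bd by force
next
  case (Suc e)
  define M where "M = NN d k e"
  define G where "G = 2 * d + 3"
  define C where "C = M + 2 * G"
  have N: "NN d k (Suc e) = k * C" unfolding M_def G_def C_def by simp
  have kC: "\<And>t. t < k \<Longrightarrow> t * C + C \<le> k * C"
  proof -
    fix t assume "t < k"
    then have "Suc t * C \<le> k * C" by (intro mult_le_mono1) simp
    then show "t * C + C \<le> k * C" by simp
  qed
  show ?case
  proof (cases "\<exists>t<k. \<forall>i. q + t * C + G < i \<and> i < q + t * C + G + M \<longrightarrow> good V E xs e i")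
    case True
    then obtain t where tk: "t < k" and g: "\<forall>i. q + t * C + G < i \<and> i < q + t * C + G + M \<longrightarrow> good V E xs e i"
      by blast
    have "q + t * C + G + M < length xs" using kC[OF tk] Suc.prems(2)[unfolded N] C_def by linarith
    then show ?thesis using Suc.IH[of "q + t * C + G"] Suc.prems(1) g unfolding M_def by simp
  next
    case False
    then have "\<forall>t. \<exists>b. t < k \<longrightarrow> q + t * C + G < b \<and> b < q + t * C + G + M \<and> \<not> good V E xs e b"
      by blast
    then obtain b where b: "\<And>t. t < k \<Longrightarrow> q + t * C + G < b t \<and> b t < q + t * C + G + M \<and> \<not> good V E xs e (b t)"
      by metis
    define L where "L = k * C"
    define ys where "ys = take (Suc L) (drop q xs)"
    have lenx: "q + L < length xs" using Suc.prems(2)[unfolded N] unfolding L_def by simp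
    have yn: "\<And>i. i \<le> L \<Longrightarrow> ys ! i = xs ! (q + i)" unfolding ys_def using lenx by simp
    have gad: "c_gadget V E (Suc e) L ys"
      unfolding ys_def using window[OF p lenx] Suc.prems(3)[unfolded N] unfolding L_def by simp
    have bk: "\<And>t. t < k \<Longrightarrow> q + G < b t \<and> b t + G < q + L"
    proof -
      fix t assume tk: "t < k"
      show "q + G < b t \<and> b t + G < q + L" using b[OF tk] kC[OF tk] unfolding L_def C_def by simp
    qed
    have bs: "\<And>t. Suc t < k \<Longrightarrow> b t + 2 * G < b (Suc t)"
    proof -
      fix t assume tk: "Suc t < k"
      have "Suc t * C = t * C + C" by simp
      then show "b t + 2 * G < b (Suc t)" using b[OF tk] b[of t] tk unfolding C_def by simp
    qed
    have jn: "\<And>t. t < k \<Longrightarrow> (\<exists>r. is_ray V E r \<and> hd r = xs ! b t \<and> length r = Suc (Suc e) \<and>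
            xs ! (b t - 1) \<notin> set r \<and> xs ! Suc (b t) \<notin> set r) \<and> \<not> is_fork V E (xs ! b t)"
    proof -
      fix t assume tk: "t < k"
      have "q < b t \<and> b t < q + k * C" using bk[OF tk] unfolding L_def by linarith
      then have g1: "good V E xs (Suc e) (b t)" using Suc.prems(3)[unfolded N] by blast
      show "?thesis t"
        using junction[OF t bd p _ _ g1] b[OF tk] bk[OF tk] lenx unfolding G_def by simp
    qed
    define I where "I = (\<lambda>j. if j = 0 then 0 else if j \<le> k then b (j - 1) - q else L)"
    have I0: "I 0 = 0" and Ik: "I (Suc k) = L" unfolding I_def by auto
    have Ij: "\<And>j. 1 \<le> j \<Longrightarrow> j \<le> k \<Longrightarrow> I j = b (j - 1) - q" unfolding I_def by simp
    have ord: "\<forall>j\<le>k. I j < I (Suc j) \<and> I (Suc j) - I j > 2 * Suc e"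
    proof (intro allI impI)
      fix j assume j: "j \<le> k"
      have ge: "2 * Suc e < G" using Suc.prems(1) unfolding G_def by simp
      consider "j = 0" | "0 < j" "j < k" | "j = k" "0 < j" using j by linarith
      then show "I j < I (Suc j) \<and> I (Suc j) - I j > 2 * Suc e"
      proof cases
        case 1
        then show ?thesis using bk[of 0] k ge I0 Ij[of 1] by auto
      next
        case 2
        then obtain t where tt: "j = Suc t" by (cases j) auto
        have "I j = b t - q" "I (Suc j) = b (Suc t) - q" using Ij[of j] Ij[of "Suc j"] 2 tt by auto
        then show ?thesis using bs[of t] bk[of t] 2 tt ge by auto
      next
        case 3
        then obtain t where tt: "j = Suc t" by (cases j) auto
        have "I j = b t - q" "I (Suc j) = L" using Ij[of j] Ik 3 tt by auto
        then show ?thesis using bk[of t] 3 tt ge by auto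
      qed
    qed
    have ysI: "\<And>j. 1 \<le> j \<Longrightarrow> j \<le> k \<Longrightarrow> ys ! I j = xs ! b (j - 1) \<and>
        ys ! (I j - 1) = xs ! (b (j - 1) - 1) \<and> ys ! Suc (I j) = xs ! Suc (b (j - 1))"
    proof -
      fix j assume j: "1 \<le> j" "j \<le> k"
      have t: "j - 1 < k" using j by simp
      have h: "q + G < b (j - 1)" "b (j - 1) + G < q + L" using bk[OF t] by auto
      have "I j = b (j - 1) - q" using Ij j by simp
      then show "?thesis j" using yn[of "I j"] yn[of "I j - 1"] yn[of "Suc (I j)"] h unfolding G_def
        by (simp add: Suc_diff_le)
    qed
    have "closed_strong_c_gadget V E (Suc e) k ys"
      unfolding closed_strong_c_gadget_def
    proof (intro exI[of _ L] conjI gad exI[of _ I] I0 Ik ord ballI)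
      fix j assume "j \<in> {1..k}"
      then have j: "1 \<le> j" "j \<le> k" by auto
      then show "\<exists>r. is_ray V E r \<and> hd r = ys ! I j \<and> length r = Suc (Suc e) \<and>
             ys ! (I j - 1) \<notin> set r \<and> ys ! Suc (I j) \<notin> set r"
        using ysI[OF j] jn[of "j - 1"] by simp
    next
      show "\<not> is_fork V E (ys ! I 1)" using ysI[of 1] jn[of 0] k by simp
    next
      show "\<not> is_fork V E (ys ! I k)" using ysI[of k] jn[of "k - 1"] k by simp
    qed
    then show ?thesis using Suc.prems(1) by auto
  qed
qed


theorem corollary35:
  fixes d k :: nat
  assumes "d \<ge> 1" and "k \<ge> 1"
  shows "\<exists>L > 0. \<forall>(V :: nat set) E.
           is_tree V E \<and>
           (\<exists>xs. two_path V E xs \<and> length xs = Suc d) \<and>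
           (\<forall>xs. two_path V E xs \<longrightarrow> length xs \<le> Suc d) \<and>
           (\<exists>xs. c_gadget V E d L xs)
           \<longrightarrow> (\<exists>d'. 1 \<le> d' \<and> d' \<le> d \<and>
                 (\<exists>k' xs. k' \<ge> k \<and> closed_strong_c_gadget V E d' k' xs))"
proof -
  have pos: "0 < NN d k d" using assms by (cases d) auto
  have main': "\<exists>d'. 1 \<le> d' \<and> d' \<le> d \<and> (\<exists>k' xs. k' \<ge> k \<and> closed_strong_c_gadget V E d' k' xs)"
    if a: "is_tree V E \<and>
           (\<exists>xs. two_path V E xs \<and> length xs = Suc d) \<and>
           (\<forall>xs. two_path V E xs \<longrightarrow> length xs \<le> Suc d) \<and>
           (\<exists>xs. c_gadget V E d (NN d k d) xs)" for V :: "nat set" and E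
  proof -
    obtain xs where g: "c_gadget V E d (NN d k d) xs" using a by blast
    have t: "is_tree V E" and bd: "\<forall>r. two_path V E r \<longrightarrow> length r \<le> Suc d" using a by auto
    have p: "is_path V E xs" and l: "length xs = Suc (NN d k d)" using g unfolding c_gadget_def by auto
    have gd: "\<forall>i. 0 < i \<and> i < 0 + NN d k d \<longrightarrow> good V E xs d i"
      using g unfolding c_gadget_def good_def by simp
    show ?thesis using main[OF t bd p assms(2), of d 0] gd l by simp
  qed
  show ?thesis using pos main' by blast
qed

end
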